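(* Let $\hat a=a_1+a_2\varepsilon$, $\hat b=b_1+b_2\varepsilon\in\mathbb{DC}$ with $a_1,b_1\notin\mathbb R$, and suppose $\hat q=q_1+q_2 j+(q_3+q_4 j)\varepsilon\in\hat{\mathbb U}$ satisfies $\hat q^*\hat a\hat q=\hat b$. Then either $$\hat a=\hat b\quad\text{and}\quad\{\hat q\in\hat{\mathbb U}:\hat a\hat q=\hat q\hat b\}=\mathbb{DC}\cap\hat{\mathbb U},$$ or $$\hat a=\overline{\hat b}\quad\text{and}\quad\{\hat q\in\hat{\mathbb U}:\hat a\hat q=\hat q\hat b\}=\{\hat q j:\hat q\in\mathbb{DC}\cap\hat{\mathbb U}\}.$$
   Context: $\mathbb{Q}$ denotes the real quaternions with units $i,j,k$; complex numbers are identified with quaternions $a+bi$ (so $jz=\bar z j$). $\varepsilon$ satisfies $\varepsilon\ne0$, $\varepsilon^2=0$ and commutes with quaternions. $\mathbb{DC}$ is the set of dual complex numbers $a+b\varepsilon$, $a,b\in\mathbb C$, and $\overline{a+b\varepsilon}=\bar a+\bar b\varepsilon$. A dual quaternion is $\tilde p_{st}+\tilde p_{\mathcal I}\varepsilon$ with quaternions $\tilde p_{st},\tilde p_{\mathcal I}$, conjugate $\hat p^*=\tilde p_{st}^*+\tilde p_{\mathcal I}^*\varepsilon$. $\hat{\mathbb U}$ is the set of unit dual quaternions, i.e. those $\hat p$ with $|\hat p|=1$, where $|\hat p|=|\tilde p_{st}|+\frac{\mathrm{sc}(\tilde p_{st}^*\tilde p_{\mathcal I})}{|\tilde p_{st}|}\varepsilon$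 for $\tilde p_{st}\ne0$, $\mathrm{sc}(\tilde p)=\frac12(\tilde p+\tilde p^* )$; equivalently $\hat p^*\hat p=\hat p\hat p^*=1$. *)

theory Defs
  imports Complex_Main
begin

datatype quat = Quat (qre: real) (qi: real) (qj: real) (qk: real)

instantiation quat :: "{zero, one, plus, minus, times}"
begin
definition "0 = Quat 0 0 0 0"
definition "1 = Quat 1 0 0 0"
definition "p + q = Quat (qre p + qre q) (qi p + qi q) (qj p + qj q) (qk p + qk q)"
definition "p - q = Quat (qre p - qre q) (qi p - qi q) (qj p - qj q) (qk p - qk q)"
definition "p * q = Quat
   (qre p * qre q - qi p * qi q - qj p * qj q - qk p * qk q)
   (qre p * qi q + qi p * qre q + qj p * qk q - qk p * qj q)
   (qre p * qj q - qi p * qk q + qj p * qre q + qk p * qi q)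
   (qre p * qk q + qi p * qj q - qj p * qi q + qk p * qre q)"
instance ..
end

definition qcnj :: "quat \<Rightarrow> quat" where
  "qcnj p = Quat (qre p) (- qi p) (- qj p) (- qk p)"

definition qnorm :: "quat \<Rightarrow> real" where
  "qnorm p = sqrt ((qre p)\<^sup>2 + (qi p)\<^sup>2 + (qj p)\<^sup>2 + (qk p)\<^sup>2)"

definition qsc :: "quat \<Rightarrow> quat" where
  "qsc p = Quat ((qre (p + qcnj p)) / 2) ((qi (p + qcnj p)) / 2)
                ((qj (p + qcnj p)) / 2) ((qk (p + qcnj p)) / 2)"

definition qreal :: "real \<Rightarrow> quat" where "qreal r = Quat r 0 0 0"
definition qscale :: "real \<Rightarrow> quat \<Rightarrow> quat" where
  "qscale r p = Quat (r * qre p) (r * qi p) (r * qj p) (r * qk p)"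

definition qcomplex :: "complex \<Rightarrow> quat" where
  "qcomplex z = Quat (Re z) (Im z) 0 0"

text \<open>Dual quaternions p_st + p_I eps, eps^2 = 0, eps central.\<close>
datatype dquat = DQ (dst: quat) (ddu: quat)

instantiation dquat :: "{one, times}"
begin
definition "1 = DQ 1 0"
definition "p * q = DQ (dst p * dst q) (dst p * ddu q + ddu p * dst q)"
instance ..
end

definition dcnj :: "dquat \<Rightarrow> dquat" where
  "dcnj p = DQ (qcnj (dst p)) (qcnj (ddu p))"

text \<open>|p| = |p_st| + sc(p_st^* p_I)/|p_st| eps (for p_st nonzero)\<close>
definition dabs :: "dquat \<Rightarrow> dquat" where
  "dabs p = DQ (qreal (qnorm (dst p)))
               (qscale (1 / qnorm (dst p)) (qsc (qcnj (dst p) * ddu p)))"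

definition UDQ :: "dquat set" where
  "UDQ = {p. dst p \<noteq> 0 \<and> dabs p = 1}"

definition dc :: "complex \<Rightarrow> complex \<Rightarrow> dquat" where
  "dc a b = DQ (qcomplex a) (qcomplex b)"

definition DC :: "dquat set" where
  "DC = {dc a b | a b. True}"

definition dj :: dquat where "dj = DQ (Quat 0 0 1 0) 0"

end

theory Submission
  imports Defs
begin
definition cx :: "quat \<Rightarrow> complex" where "cx p = Complex (qre p) (qi p)"
definition cy :: "quat \<Rightarrow> complex" where "cy p = Complex (qj p) (qk p)"
lemma quat_eq_iff: "p = q \<longleftrightarrow> cx p = cx q \<and> cy p = cy q"
  by (cases p; cases q) (auto simp: cx_def cy_def)
lemma cx_mult[simp]: "cx (p*q) = cx p * cx q - cy p * cnj (cy q)"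
  by (simp add: cx_def cy_def times_quat_def complex_eq_iff)
lemma cy_mult[simp]: "cy (p*q) = cx p * cy q + cy p * cnj (cx q)"
  by (simp add: cx_def cy_def times_quat_def complex_eq_iff algebra_simps)
lemma cx_add[simp]: "cx (p+q) = cx p + cx q" by (simp add: cx_def plus_quat_def complex_eq_iff)
lemma cy_add[simp]: "cy (p+q) = cy p + cy q" by (simp add: cy_def plus_quat_def complex_eq_iff)
lemma cx_cnj[simp]: "cx (qcnj p) = cnj (cx p)" by (simp add: cx_def qcnj_def complex_eq_iff)
lemma cy_cnj[simp]: "cy (qcnj p) = - cy p" by (simp add: cy_def qcnj_def complex_eq_iff)
lemma cx_0[simp]: "cx 0 = 0" "cy 0 = 0" by (simp_all add: cx_def cy_def zero_quat_def complex_eq_iff)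
lemma cx_1[simp]: "cx 1 = 1" "cy 1 = 0" by (simp_all add: cx_def cy_def one_quat_def complex_eq_iff)
lemma cx_qc[simp]: "cx (qcomplex z) = z" "cy (qcomplex z) = 0" by (simp_all add: cx_def cy_def qcomplex_def complex_eq_iff)
lemma cx_j[simp]: "cx (Quat 0 0 1 0) = 0" "cy (Quat 0 0 1 0) = 1" by (simp_all add: cx_def cy_def complex_eq_iff)

lemma dq_eq_iff: "p = q \<longleftrightarrow> dst p = dst q \<and> ddu p = ddu q"
  by (cases p; cases q) auto
lemma dst_mult[simp]: "dst (p*q) = dst p * dst q" and ddu_mult[simp]: "ddu (p*q) = dst p * ddu q + ddu p * dst q"
  by (simp_all add: times_dquat_def)
lemma dq1[simp]: "dst 1 = 1" "ddu 1 = 0" by (simp_all add: one_dquat_def)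
lemma dcnj_simps[simp]: "dst (dcnj p) = qcnj (dst p)" "ddu (dcnj p) = qcnj (ddu p)" by (simp_all add: dcnj_def)
lemma dc_simps[simp]: "dst (dc a b) = qcomplex a" "ddu (dc a b) = qcomplex b" by (simp_all add: dc_def)
lemma dj_simps[simp]: "dst dj = Quat 0 0 1 0" "ddu dj = 0" by (simp_all add: dj_def)

lemma dq_assoc: "(p::dquat) * q * r = p * (q * r)"
  by (simp add: dq_eq_iff quat_eq_iff algebra_simps)
lemma dq_one: "1 * (p::dquat) = p"
  by (simp add: dq_eq_iff quat_eq_iff)

lemma UDQ_iff: "p \<in> UDQ \<longleftrightarrow> cmod (cx (dst p))^2 + cmod (cy (dst p))^2 = 1 \<and>
   Re (cnj (cx (dst p)) * cx (ddu p) + cy (dst p) * cnj (cy (ddu p))) = 0"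
proof -
  obtain s0 s1 s2 s3 where s: "dst p = Quat s0 s1 s2 s3" by (cases "dst p")
  obtain t0 t1 t2 t3 where t: "ddu p = Quat t0 t1 t2 t3" by (cases "ddu p")
  have n: "cmod (cx (dst p))^2 + cmod (cy (dst p))^2 = s0^2+s1^2+s2^2+s3^2"
    by (simp add: s cx_def cy_def cmod_def)
  show ?thesis
    unfolding UDQ_def dabs_def n
    by (auto simp: s t qnorm_def qreal_def one_dquat_def one_quat_def zero_quat_def qscale_def qsc_def
        qcnj_def plus_quat_def times_quat_def cx_def cy_def algebra_simps)
qed

lemma UDQ_inv: assumes "q \<in> UDQ" shows "q * dcnj q = 1"
proof -
  define x where "x = cx (dst q)"
  define y where "y = cy (dst q)"
  define u where "u = cx (ddu q)"
  define v where "v = cy (ddu q)"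
  have h: "cmod x^2 + cmod y^2 = 1" "Re (cnj x * u + y * cnj v) = 0" using assms by (auto simp: UDQ_iff x_def y_def u_def v_def)
  have 1: "x * cnj x + y * cnj y = 1"
  proof -
    have "Re x^2+Im x^2+(Re y^2+Im y^2) = 1" using h(1) by (simp add: cmod_power2)
    then show ?thesis by (simp add: complex_eq_iff power2_eq_square)
  qed
  have 2: "x * cnj u + y * cnj v + u * cnj x + v * cnj y = 0"
    using h(2) by (simp add: complex_eq_iff algebra_simps)
  show ?thesis using 1 2
    by (simp add: dq_eq_iff quat_eq_iff x_def[symmetric] y_def[symmetric] u_def[symmetric] v_def[symmetric] algebra_simps)
qed

lemma comm_iff: "dc a1 a2 * p = p * dc b1 b2 \<longleftrightarrow>
   cx (dst p) * (a1 - b1) = 0 \<and> cy (dst p) * (a1 - cnj b1) = 0 \<and>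
   cx (ddu p) * (a1 - b1) + cx (dst p) * (a2 - b2) = 0 \<and>
   cy (ddu p) * (a1 - cnj b1) + cy (dst p) * (a2 - cnj b2) = 0"
  by (simp add: dq_eq_iff quat_eq_iff algebra_simps)

lemma dc_eq_iff: "dc a b = dc c d \<longleftrightarrow> a = c \<and> b = d"
  by (simp add: dq_eq_iff quat_eq_iff)

lemma notreal: "b \<notin> \<real> \<Longrightarrow> b - cnj b \<noteq> 0"
  using Reals_cnj_iff by force

lemma DC_mem: "p \<in> DC \<longleftrightarrow> cy (dst p) = 0 \<and> cy (ddu p) = 0"
proof
  assume "p \<in> DC" then show "cy (dst p) = 0 \<and> cy (ddu p) = 0" by (auto simp: DC_def)
next
  assume a: "cy (dst p) = 0 \<and> cy (ddu p) = 0"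
  have "p = dc (cx (dst p)) (cx (ddu p))" using a by (simp add: dq_eq_iff quat_eq_iff)
  then show "p \<in> DC" unfolding DC_def by blast
qed

lemma DCj_mem: "p \<in> {r * dj | r. r \<in> DC \<inter> UDQ} \<longleftrightarrow> p \<in> UDQ \<and> cx (dst p) = 0 \<and> cx (ddu p) = 0"
proof
  assume "p \<in> {r * dj | r. r \<in> DC \<inter> UDQ}"
  then obtain a b where p: "p = dc a b * dj" "dc a b \<in> UDQ" by (auto simp: DC_def)
  then show "p \<in> UDQ \<and> cx (dst p) = 0 \<and> cx (ddu p) = 0"
    by (simp add: UDQ_iff mult.commute)
next
  assume a: "p \<in> UDQ \<and> cx (dst p) = 0 \<and> cx (ddu p) = 0"
  have e: "p = dc (cy (dst p)) (cy (ddu p)) * dj" using a by (simp add: dq_eq_iff quat_eq_iff)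
  have "dc (cy (dst p)) (cy (ddu p)) \<in> UDQ" using a by (auto simp: UDQ_iff mult.commute)
  then show "p \<in> {r * dj | r. r \<in> DC \<inter> UDQ}" using e unfolding DC_def by blast
qed

theorem corollary3p1:
  fixes a1 a2 b1 b2 :: complex and q :: dquat
  assumes "a1 \<notin> \<real>" and "b1 \<notin> \<real>"
    and "q \<in> UDQ"
    and "dcnj q * dc a1 a2 * q = dc b1 b2"
  shows "(dc a1 a2 = dc b1 b2 \<and>
            {p \<in> UDQ. dc a1 a2 * p = p * dc b1 b2} = DC \<inter> UDQ)
       \<or> (dc a1 a2 = dc (cnj b1) (cnj b2) \<and>
            {p \<in> UDQ. dc a1 a2 * p = p * dc b1 b2} = {p * dj | p. p \<in> DC \<inter> UDQ})"
proof -
  have "dc a1 a2 * q = (q * dcnj q) * dc a1 a2 * q" using UDQ_inv[OF assms(3)] by (simp add: dq_one)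
  also have "\<dots> = q * (dcnj q * dc a1 a2 * q)" by (simp add: dq_assoc)
  finally have c: "dc a1 a2 * q = q * dc b1 b2" using assms(4) by simp
  have nb: "b1 - cnj b1 \<noteq> 0" using notreal[OF assms(2)] .
  define x where "x = cx (dst q)"
  define y where "y = cy (dst q)"
  have "x \<noteq> 0 \<or> y \<noteq> 0" using assms(3) by (auto simp: UDQ_iff x_def y_def)
  then show ?thesis
  proof
    assume x: "x \<noteq> 0"
    have e1: "a1 = b1" using c x by (simp add: comm_iff x_def)
    have "y = 0" using c e1 nb by (simp add: comm_iff y_def)
    then have e2: "a2 = b2" using c e1 x by (simp add: comm_iff x_def y_def)
    have "{p \<in> UDQ. dc a1 a2 * p = p * dc b1 b2} = DC \<inter> UDQ"
      using nb by (auto simp: comm_iff DC_mem e1 e2)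
    then show ?thesis using e1 e2 by simp
  next
    assume y: "y \<noteq> 0"
    have e1: "a1 = cnj b1" using c y by (simp add: comm_iff y_def)
    have "x = 0" using c e1 nb by (simp add: comm_iff x_def)
    then have e2: "a2 = cnj b2" using c e1 y by (simp add: comm_iff x_def y_def)
    have nb': "cnj b1 - b1 \<noteq> 0" using nb by auto
    have "{p \<in> UDQ. dc a1 a2 * p = p * dc b1 b2} = {p. p \<in> UDQ \<and> cx (dst p) = 0 \<and> cx (ddu p) = 0}"
      using nb' by (auto simp: comm_iff e1 e2)
    also have "\<dots> = {p * dj | p. p \<in> DC \<inter> UDQ}" using DCj_mem by blast
    finally have "{p \<in> UDQ. dc a1 a2 * p = p * dc b1 b2} = {p * dj | p. p \<in> DC \<inter> UDQ}" .
    then show ?thesis using e1 e2 by simp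
  qed
qed
end
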